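(* None of the following infinite sequences is $q$-automatic for any integer $q\ge2$: (i) the fixed point beginning with $a$ of $a\to aca$, $b\to d$, $c\to aba$, $d\to c$; (ii) the fixed point beginning with $x$ of $x\to xzy$, $y\to xx$, $z\to yy$; (iii) the infinite fixed points of $\sigma^3$ (those beginning with $a$ and with $b$), where $\sigma$ is $a\to b$, $b\to c$, $c\to aba$; (iv) the three infinite fixed points of $\rho^3$ (beginning with $a$, $b$, $c$ respectively), where $\rho$ is $a\to c$, $b\to aba$, $c\to b$.
   Context: For an integer $q\ge 2$, a sequence is $q$-automatic if it is the image under a letter-to-letter map of a fixed point of a morphism all of whose letter-images have length $q$. *)

theory Defs
  imports Main
begin

definition pref :: "(nat \<Rightarrow> 'a) \<Rightarrow> nat \<Rightarrow> 'a list" where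
  "pref w n = map w [0..<n]"

definition morph_word :: "('a \<Rightarrow> 'a list) \<Rightarrow> 'a list \<Rightarrow> 'a list" where
  "morph_word \<sigma> xs = concat (map \<sigma> xs)"

fun morph_pow :: "('a \<Rightarrow> 'a list) \<Rightarrow> nat \<Rightarrow> 'a \<Rightarrow> 'a list" where
  "morph_pow \<sigma> 0 x = [x]"
| "morph_pow \<sigma> (Suc n) x = morph_word \<sigma> (morph_pow \<sigma> n x)"

text \<open>The infinite word w is a fixed point of \<sigma>: the image \<sigma>(w) (the concatenation
  of \<sigma>(w 0), \<sigma>(w 1), ...) is an infinite word and equals w.\<close>
definition is_fixed_point :: "('a \<Rightarrow> 'a list) \<Rightarrow> (nat \<Rightarrow> 'a) \<Rightarrow> bool" where
  "is_fixed_point \<sigma> w \<longleftrightarrow>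
     (\<forall>m. \<exists>n. m \<le> length (morph_word \<sigma> (pref w n))) \<and>
     (\<forall>n. morph_word \<sigma> (pref w n) = pref w (length (morph_word \<sigma> (pref w n))))"

text \<open>q-automatic: image under a letter-to-letter map \<tau> of a fixed point u of a
  q-uniform morphism \<phi> on a finite alphabet A (encoded as a finite set of naturals).\<close>
definition q_automatic :: "nat \<Rightarrow> (nat \<Rightarrow> 'a) \<Rightarrow> bool" where
  "q_automatic q s \<longleftrightarrow>
     (\<exists>(A :: nat set) (\<phi> :: nat \<Rightarrow> nat list) (u :: nat \<Rightarrow> nat) (\<tau> :: nat \<Rightarrow> 'a).
        finite A \<and>
        (\<forall>c\<in>A. length (\<phi> c) = q \<and> set (\<phi> c) \<subseteq> A) \<and>
        (\<forall>n. u n \<in> A) \<and>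
        is_fixed_point \<phi> u \<and>
        (\<forall>n. s n = \<tau> (u n)))"

datatype L4 = a | b | c | d
datatype L3 = x | y | z

fun \<sigma>1 :: "L4 \<Rightarrow> L4 list" where
  "\<sigma>1 a = [a, c, a]" | "\<sigma>1 b = [d]" | "\<sigma>1 c = [a, b, a]" | "\<sigma>1 d = [c]"

fun \<sigma>2 :: "L3 \<Rightarrow> L3 list" where
  "\<sigma>2 x = [x, z, y]" | "\<sigma>2 y = [x, x]" | "\<sigma>2 z = [y, y]"

text \<open>Letters a, b, c of L4 are used for the three-letter alphabets in (iii), (iv);
  the letter d does not occur (its image is irrelevant).\<close>
fun \<sigma>3 :: "L4 \<Rightarrow> L4 list" where
  "\<sigma>3 a = [b]" | "\<sigma>3 b = [c]" | "\<sigma>3 c = [a, b, a]" | "\<sigma>3 d = [d]"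

fun \<rho> :: "L4 \<Rightarrow> L4 list" where
  "\<rho> a = [c]" | "\<rho> b = [a, b, a]" | "\<rho> c = [b]" | "\<rho> d = [d]"

end

theory Submission
  imports Defs Complex_Main "HOL-Computational_Algebra.Polynomial"
begin


lemma morph_word_append[simp]: "morph_word \<sigma> (xs @ ys) = morph_word \<sigma> xs @ morph_word \<sigma> ys"
  by (simp add: morph_word_def)

lemma morph_word_concat: "morph_word \<sigma> (concat (map f L)) = concat (map (\<lambda>g. morph_word \<sigma> (f g)) L)"
  by (induction L) (auto simp: morph_word_def)

lemma mp_Suc': "morph_pow \<sigma> (Suc k) t = concat (map (morph_pow \<sigma> k) (\<sigma> t))"
proof (induction k)
  case 0
  then show ?case by (simp add: morph_word_def)
next
  case (Suc k)
  have "morph_pow \<sigma> (Suc (Suc k)) t = morph_word \<sigma> (morph_pow \<sigma> (Suc k) t)" by simp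
  also have "\<dots> = concat (map (\<lambda>g. morph_word \<sigma> (morph_pow \<sigma> k g)) (\<sigma> t))"
    using Suc by (simp add: morph_word_concat)
  finally show ?case by simp
qed

lemma mp_Suc'_fun: "morph_pow \<sigma> (Suc k) = (\<lambda>t. concat (map (morph_pow \<sigma> k) (\<sigma> t)))"
  by (rule ext) (rule mp_Suc')

lemma concat_map_concat_map: "concat (map f (concat (map g L))) = concat (map (\<lambda>t. concat (map f (g t))) L)"
  by (induction L) auto

lemma mp_add: "morph_pow \<sigma> (k + m) t = concat (map (morph_pow \<sigma> k) (morph_pow \<sigma> m t))"
proof (induction m arbitrary: k)
  case 0
  then show ?case by simp
next
  case (Suc m)
  have "morph_pow \<sigma> (k + Suc m) t = morph_pow \<sigma> (Suc k + m) t" by simp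
  also have "\<dots> = concat (map (morph_pow \<sigma> (Suc k)) (morph_pow \<sigma> m t))" using Suc by blast
  also have "\<dots> = concat (map (\<lambda>g. concat (map (morph_pow \<sigma> k) (\<sigma> g))) (morph_pow \<sigma> m t))"
    by (simp only: mp_Suc'_fun)
  also have "\<dots> = concat (map (morph_pow \<sigma> k) (morph_pow \<sigma> (Suc m) t))"
    by (simp add: morph_word_def concat_map_concat_map)
  finally show ?case .
qed

lemma set_mp_Suc: "set (morph_pow \<sigma> (Suc k) t) = (\<Union>g\<in>set (morph_pow \<sigma> k t). set (\<sigma> g))"
  by (simp add: morph_word_def)

definition Mk :: "('l \<Rightarrow> 'l list) \<Rightarrow> nat \<Rightarrow> 'l list \<Rightarrow> 'l list" where
  "Mk \<sigma> k W = concat (map (morph_pow \<sigma> k) W)"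

lemma mp_Suc_fun: "morph_pow \<sigma> (Suc k) = (\<lambda>g. morph_word \<sigma> (morph_pow \<sigma> k g))"
  by auto

lemma Mk_Suc: "Mk \<sigma> (Suc k) W = morph_word \<sigma> (Mk \<sigma> k W)"
  by (simp only: Mk_def morph_word_concat mp_Suc_fun)

lemma Mk_0[simp]: "Mk \<sigma> 0 W = W"
  by (induction W) (auto simp: Mk_def)

lemma length_pref[simp]: "length (pref w n) = n"
  by (simp add: pref_def)

lemma pref_Suc: "pref w (Suc n) = pref w n @ [w n]"
  by (simp add: pref_def)

lemma pref_0[simp]: "pref w 0 = []" by (simp add: pref_def)

lemma take_pref: "N \<le> M \<Longrightarrow> take N (pref w M) = pref w N"
  by (simp add: pref_def take_map)

lemma nth_pref: "i < n \<Longrightarrow> pref w n ! i = w i"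
  by (simp add: pref_def)

lemma fp_iter:
  assumes "is_fixed_point \<sigma> w"
  shows "Mk \<sigma> k (pref w n) = pref w (length (Mk \<sigma> k (pref w n)))"
proof (induction k)
  case 0
  then show ?case by simp
next
  case (Suc k)
  have "Mk \<sigma> (Suc k) (pref w n) = morph_word \<sigma> (pref w (length (Mk \<sigma> k (pref w n))))"
    using Suc by (metis Mk_Suc)
  also have "\<dots> = pref w (length \<dots>)"
    using assms unfolding is_fixed_point_def by blast
  finally show ?case by simp
qed

lemma Mk_pref_Suc: "Mk \<sigma> k (pref w (Suc n)) = Mk \<sigma> k (pref w n) @ morph_pow \<sigma> k (w n)"
  by (simp add: Mk_def pref_Suc)

lemma mp_nonempty:
  assumes "\<forall>t\<in>S. \<sigma> t \<noteq> [] \<and> set (\<sigma> t) \<subseteq> S" "t \<in> S"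
  shows "morph_pow \<sigma> k t \<noteq> [] \<and> set (morph_pow \<sigma> k t) \<subseteq> S"
  using assms(2)
proof (induction k arbitrary: t)
  case 0 thus ?case by simp
next
  case (Suc k)
  then obtain g where g: "g \<in> set (\<sigma> t)" using assms(1) by (meson last_in_set)
  have gS: "g \<in> S" using g Suc.prems assms(1) by auto
  have ne: "morph_pow \<sigma> k g \<noteq> []" using Suc.IH[OF gS] by blast
  have "morph_pow \<sigma> (Suc k) t \<noteq> []" using g ne unfolding mp_Suc' by auto
  moreover have "set (morph_pow \<sigma> (Suc k) t) \<subseteq> S"
    unfolding mp_Suc' using Suc.IH Suc.prems assms(1) by fastforce
  ultimately show ?case by blast
qed

lemma decomp:
  assumes fp: "is_fixed_point \<sigma> w" and cl: "\<forall>t\<in>S. \<sigma> t \<noteq> [] \<and> set (\<sigma> t) \<subseteq> S"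
    and inS: "\<forall>i. w i \<in> S"
  shows "\<exists>n r. r < length (morph_pow \<sigma> k (w n)) \<and>
     pref w N = Mk \<sigma> k (pref w n) @ take r (morph_pow \<sigma> k (w n))"
proof -
  define f where "f n = length (Mk \<sigma> k (pref w n))" for n
  have fS: "f (Suc n) = f n + length (morph_pow \<sigma> k (w n))" for n
    by (simp add: f_def Mk_pref_Suc)
  have pos: "length (morph_pow \<sigma> k (w n)) > 0" for n
    using mp_nonempty[OF cl inS[rule_format, of n]] by auto
  have fge: "f n \<ge> n" for n
  proof (induction n)
    case (Suc n) then show ?case using fS[of n] pos[of n] by linarith
  qed simp
  define n where "n = (LEAST n. N < f (Suc n))"
  have ex: "N < f (Suc N)" using fge[of "Suc N"] by simp
  have n1: "N < f (Suc n)" unfolding n_def by (rule LeastI[of _ N]) (rule ex)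
  have n2: "f n \<le> N"
  proof (cases n)
    case 0 then show ?thesis by (simp add: f_def Mk_def)
  next
    case (Suc n')
    then have "\<not> N < f (Suc n')" using not_less_Least[of n' "\<lambda>n. N < f (Suc n)"] n_def by auto
    then show ?thesis using Suc by simp
  qed
  define r where "r = N - f n"
  have r: "r < length (morph_pow \<sigma> k (w n))" using n1 n2 fS[of n] r_def by simp
  have "pref w (f (Suc n)) = Mk \<sigma> k (pref w n) @ morph_pow \<sigma> k (w n)"
    using fp_iter[OF fp, of k "Suc n"] by (simp add: f_def Mk_pref_Suc)
  hence "pref w N = take N (Mk \<sigma> k (pref w n) @ morph_pow \<sigma> k (w n))"
    using take_pref[of N "f (Suc n)" w] n1 by simp
  also have "\<dots> = Mk \<sigma> k (pref w n) @ take r (morph_pow \<sigma> k (w n))"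
    using n2 r_def by (simp add: f_def)
  finally show ?thesis using r by blast
qed


definition cnt :: "'l \<Rightarrow> 'l list \<Rightarrow> nat" where
  "cnt \<alpha> W = length (filter ((=) \<alpha>) W)"

lemma cnt_append[simp]: "cnt \<alpha> (xs @ ys) = cnt \<alpha> xs + cnt \<alpha> ys"
  by (simp add: cnt_def)

lemma cnt_concat_map: "cnt \<alpha> (concat (map f L)) = sum_list (map (\<lambda>t. cnt \<alpha> (f t)) L)"
  by (induction L) (auto simp: cnt_def)

lemma length_concat_map: "length (concat (map f L)) = sum_list (map (\<lambda>t. length (f t)) L)"
  by (induction L) auto

lemma cnt_le: "cnt \<alpha> W \<le> length W"
  by (simp add: cnt_def)

lemma real_sum_list_map: "real (sum_list (map f L)) = sum_list (map (\<lambda>t. real (f t)) L)"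
  by (induction L) auto

lemma sum_list_le_mult:
  fixes c l :: "'l \<Rightarrow> real"
  assumes "\<forall>g\<in>set L. c g \<le> hi * l g"
  shows "sum_list (map c L) \<le> hi * sum_list (map l L)"
  using assms by (induction L) (auto simp: algebra_simps add_mono)

lemma sum_list_ge_mult:
  fixes c l :: "'l \<Rightarrow> real"
  assumes "\<forall>g\<in>set L. lo * l g \<le> c g"
  shows "lo * sum_list (map l L) \<le> sum_list (map c L)"
  using assms by (induction L) (auto simp: algebra_simps add_mono)

lemma sum_list_contr:
  fixes c l :: "'l \<Rightarrow> real"
  assumes "\<forall>g\<in>set L. c g \<le> hi * l g" "g0 \<in> set L" "c g0 \<le> lo * l g0"
  shows "sum_list (map c L) \<le> hi * sum_list (map l L) - (hi - lo) * l g0"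
proof -
  obtain L1 L2 where L: "L = L1 @ g0 # L2" using split_list[OF assms(2)] by blast
  have 1: "sum_list (map c L1) \<le> hi * sum_list (map l L1)"
    using assms(1) L by (intro sum_list_le_mult) auto
  have 2: "sum_list (map c L2) \<le> hi * sum_list (map l L2)"
    using assms(1) L by (intro sum_list_le_mult) auto
  show ?thesis using 1 2 assms(3) unfolding L by (simp add: algebra_simps)
qed

lemma sum_list_pos:
  fixes l :: "'l \<Rightarrow> real"
  assumes "L \<noteq> []" "\<forall>g\<in>set L. l g > 0"
  shows "sum_list (map l L) > 0"
  using assms
proof (induction L)
  case (Cons g L)
  then show ?case by (cases "L = []") (auto intro: add_pos_pos)
qed simp

lemma sum_list_abs_err:
  fixes f g :: "'l \<Rightarrow> real"
  assumes "\<forall>t\<in>set L. \<bar>f t - th * g t\<bar> \<le> e * g t"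
  shows "\<bar>sum_list (map f L) - th * sum_list (map g L)\<bar> \<le> e * sum_list (map g L)"
  using assms
proof (induction L)
  case (Cons t L)
  have "\<bar>sum_list (map f (t # L)) - th * sum_list (map g (t # L))\<bar>
      = \<bar>(f t - th * g t) + (sum_list (map f L) - th * sum_list (map g L))\<bar>"
    by (simp add: algebra_simps)
  also have "\<dots> \<le> \<bar>f t - th * g t\<bar> + \<bar>sum_list (map f L) - th * sum_list (map g L)\<bar>"
    by (rule abs_triangle_ineq)
  also have "\<dots> \<le> e * g t + e * sum_list (map g L)" using Cons by (intro add_mono) auto
  finally show ?case by (simp add: algebra_simps)
qed simp

lemma sum_list_concat_map: "sum_list (map h (concat (map f L))) = sum_list (map (\<lambda>g. sum_list (map h (f g))) L)"
  by (induction L) auto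

locale prim_subst =
  fixes \<sigma> :: "'l \<Rightarrow> 'l list" and S :: "'l set" and h :: "'l \<Rightarrow> real" and lam :: real and m :: nat
  assumes finS: "finite S" and neS: "S \<noteq> {}"
    and cl: "\<forall>t\<in>S. \<sigma> t \<noteq> [] \<and> set (\<sigma> t) \<subseteq> S"
    and hpos: "\<forall>t\<in>S. h t > 0"
    and heig: "\<forall>t\<in>S. sum_list (map h (\<sigma> t)) = lam * h t"
    and prim: "\<forall>t\<in>S. \<forall>g\<in>S. g \<in> set (morph_pow \<sigma> m t)"
    and mpos: "m > 0"
begin

definition C :: "'l \<Rightarrow> nat \<Rightarrow> 'l \<Rightarrow> real" where
  "C \<alpha> k t = real (cnt \<alpha> (morph_pow \<sigma> k t))"
definition Ln :: "nat \<Rightarrow> 'l \<Rightarrow> real" where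
  "Ln k t = real (length (morph_pow \<sigma> k t))"
definition R :: "'l \<Rightarrow> nat \<Rightarrow> 'l \<Rightarrow> real" where
  "R \<alpha> k t = C \<alpha> k t / Ln k t"

lemma mpS: "t \<in> S \<Longrightarrow> morph_pow \<sigma> k t \<noteq> [] \<and> set (morph_pow \<sigma> k t) \<subseteq> S"
  using mp_nonempty[OF cl] by blast

lemma C_add: "C \<alpha> (k + j) t = sum_list (map (C \<alpha> k) (morph_pow \<sigma> j t))"
  unfolding C_def mp_add cnt_concat_map real_sum_list_map by simp

lemma Ln_add: "Ln (k + j) t = sum_list (map (Ln k) (morph_pow \<sigma> j t))"
  unfolding Ln_def mp_add length_concat_map real_sum_list_map by simp

lemma C_Suc: "C \<alpha> (Suc k) t = sum_list (map (C \<alpha> k) (\<sigma> t))"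
  unfolding C_def mp_Suc' cnt_concat_map real_sum_list_map by simp

lemma Ln_Suc: "Ln (Suc k) t = sum_list (map (Ln k) (\<sigma> t))"
  unfolding Ln_def mp_Suc' length_concat_map real_sum_list_map by simp

lemma Ln_pos: "t \<in> S \<Longrightarrow> Ln k t > 0"
  using mpS[of t k] by (simp add: Ln_def)

lemma C_le: "C \<alpha> k t \<le> Ln k t" "C \<alpha> k t \<ge> 0"
  by (auto simp: C_def Ln_def cnt_le)

lemma R_bounds: "t \<in> S \<Longrightarrow> 0 \<le> R \<alpha> k t \<and> R \<alpha> k t \<le> 1"
  using Ln_pos[of t k] C_le[of \<alpha> k t] by (simp add: R_def divide_le_eq_1)

lemma lam_pos: "lam > 0"
proof -
  obtain t where t: "t \<in> S" using neS by blast
  have "sum_list (map h (\<sigma> t)) > 0" using cl t hpos by (intro sum_list_pos) auto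
  then have "lam * h t > 0" using heig t by simp
  moreover have "h t > 0" using hpos t by auto
  ultimately show ?thesis by (meson zero_less_mult_pos2)
qed

lemma H_pow: "t \<in> S \<Longrightarrow> sum_list (map h (morph_pow \<sigma> k t)) = lam ^ k * h t"
proof (induction k arbitrary: t)
  case 0 then show ?case by simp
next
  case (Suc k)
  have "sum_list (map h (morph_pow \<sigma> (Suc k) t)) = sum_list (map (\<lambda>g. sum_list (map h (morph_pow \<sigma> k g))) (\<sigma> t))"
    unfolding mp_Suc' by (rule sum_list_concat_map)
  also have "\<dots> = sum_list (map (\<lambda>g. lam ^ k * h g) (\<sigma> t))"
    using Suc cl by (intro arg_cong[where f=sum_list] map_cong) auto
  also have "\<dots> = lam ^ k * sum_list (map h (\<sigma> t))"
    by (simp add: sum_list_const_mult)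
  also have "\<dots> = lam ^ Suc k * h t" using heig Suc.prems by simp
  finally show ?case .
qed

definition hmin where "hmin = Min (h ` S)"
definition hmax where "hmax = Max (h ` S)"

lemma hmin_le: "t \<in> S \<Longrightarrow> hmin \<le> h t" and hmax_ge: "t \<in> S \<Longrightarrow> h t \<le> hmax"
  using finS by (auto simp: hmin_def hmax_def)

lemma hmin_pos: "hmin > 0"
proof -
  have "hmin \<in> h ` S" unfolding hmin_def using finS neS by (intro Min_in) auto
  then show ?thesis using hpos by auto
qed

lemma hmax_pos: "hmax > 0"
  using hmin_pos hmin_le hmax_ge neS by (meson ex_in_conv less_le_trans order.trans)

lemma Ln_lower: "t \<in> S \<Longrightarrow> lam ^ k * h t \<le> hmax * Ln k t"
proof -
  assume t: "t \<in> S"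
  have "sum_list (map h (morph_pow \<sigma> k t)) \<le> hmax * sum_list (map (\<lambda>_. 1) (morph_pow \<sigma> k t))"
    using mpS[OF t, of k] hmax_ge by (intro sum_list_le_mult) auto
  then show ?thesis using H_pow[OF t] by (simp add: Ln_def sum_list_triv)
qed

lemma Ln_upper: "t \<in> S \<Longrightarrow> hmin * Ln k t \<le> lam ^ k * h t"
proof -
  assume t: "t \<in> S"
  have "hmin * sum_list (map (\<lambda>_. 1) (morph_pow \<sigma> k t)) \<le> sum_list (map h (morph_pow \<sigma> k t))"
    using mpS[OF t, of k] hmin_le by (intro sum_list_ge_mult) auto
  then show ?thesis using H_pow[OF t] by (simp add: Ln_def sum_list_triv)
qed

definition Mx where "Mx \<alpha> k = Max (R \<alpha> k ` S)"
definition mn where "mn \<alpha> k = Min (R \<alpha> k ` S)"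

lemma R_in: "t \<in> S \<Longrightarrow> mn \<alpha> k \<le> R \<alpha> k t \<and> R \<alpha> k t \<le> Mx \<alpha> k"
  using finS by (auto simp: Mx_def mn_def)

lemma R_add_bounds:
  assumes t: "t \<in> S"
  shows "mn \<alpha> k \<le> R \<alpha> (k + j) t \<and> R \<alpha> (k + j) t \<le> Mx \<alpha> k"
proof -
  let ?L = "morph_pow \<sigma> j t"
  have L: "?L \<noteq> []" "set ?L \<subseteq> S" using mpS[OF t] by auto
  have pos: "sum_list (map (Ln k) ?L) > 0" using L Ln_pos by (intro sum_list_pos) auto
  have up: "sum_list (map (C \<alpha> k) ?L) \<le> Mx \<alpha> k * sum_list (map (Ln k) ?L)"
  proof (intro sum_list_le_mult ballI)
    fix g assume "g \<in> set ?L" then have g: "g \<in> S" using L by auto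
    show "C \<alpha> k g \<le> Mx \<alpha> k * Ln k g" using R_in[OF g, of \<alpha> k] Ln_pos[OF g, of k]
      by (simp add: R_def divide_le_eq)
  qed
  have lo: "mn \<alpha> k * sum_list (map (Ln k) ?L) \<le> sum_list (map (C \<alpha> k) ?L)"
  proof (intro sum_list_ge_mult ballI)
    fix g assume "g \<in> set ?L" then have g: "g \<in> S" using L by auto
    show "mn \<alpha> k * Ln k g \<le> C \<alpha> k g" using R_in[OF g, of \<alpha> k] Ln_pos[OF g, of k]
      by (simp add: R_def le_divide_eq)
  qed
  show ?thesis using up lo pos unfolding R_def C_add Ln_add
    by (simp add: divide_le_eq le_divide_eq)
qed

lemma Mx_dec: "Mx \<alpha> (k + j) \<le> Mx \<alpha> k"
proof -
  have "Mx \<alpha> (k + j) \<in> R \<alpha> (k + j) ` S" unfolding Mx_def using finS neS by (intro Max_in) auto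
  then show ?thesis using R_add_bounds by auto
qed

lemma mn_inc: "mn \<alpha> k \<le> mn \<alpha> (k + j)"
proof -
  have "mn \<alpha> (k + j) \<in> R \<alpha> (k + j) ` S" unfolding mn_def using finS neS by (intro Min_in) auto
  then show ?thesis using R_add_bounds by auto
qed

definition del where "del = (hmin / hmax)^2 / lam ^ m"

lemma del_pos: "del > 0"
  using hmin_pos hmax_pos lam_pos by (simp add: del_def)

lemma contr: "Mx \<alpha> (k + m) \<le> Mx \<alpha> k - del * (Mx \<alpha> k - mn \<alpha> k)"
proof -
  obtain g0 where g0: "g0 \<in> S" "R \<alpha> k g0 = mn \<alpha> k"
  proof -
    have "mn \<alpha> k \<in> R \<alpha> k ` S" unfolding mn_def using finS neS by (intro Min_in) auto
    then show ?thesis using that by auto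
  qed
  have "Mx \<alpha> (k + m) \<in> R \<alpha> (k + m) ` S" unfolding Mx_def using finS neS by (intro Max_in) auto
  then obtain t where t: "t \<in> S" "Mx \<alpha> (k + m) = R \<alpha> (k + m) t" by auto
  let ?L = "morph_pow \<sigma> m t"
  have L: "?L \<noteq> []" "set ?L \<subseteq> S" using mpS[OF t(1)] by auto
  have g0L: "g0 \<in> set ?L" using prim t g0 by blast
  define SL where "SL = sum_list (map (Ln k) ?L)"
  have pos: "SL > 0" unfolding SL_def using L Ln_pos by (intro sum_list_pos) auto
  have up: "sum_list (map (C \<alpha> k) ?L) \<le> Mx \<alpha> k * SL - (Mx \<alpha> k - mn \<alpha> k) * Ln k g0"
    unfolding SL_def
  proof (intro sum_list_contr ballI g0L)
    fix g assume "g \<in> set ?L" then have g: "g \<in> S" using L by auto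
    show "C \<alpha> k g \<le> Mx \<alpha> k * Ln k g" using R_in[OF g, of \<alpha> k] Ln_pos[OF g, of k]
      by (simp add: R_def divide_le_eq)
  next
    have "C \<alpha> k g0 = mn \<alpha> k * Ln k g0" using g0 Ln_pos[OF g0(1), of k]
      by (auto simp: R_def divide_eq_eq)
    then show "C \<alpha> k g0 \<le> mn \<alpha> k * Ln k g0" by simp
  qed
  have R_eq: "R \<alpha> (k + m) t = sum_list (map (C \<alpha> k) ?L) / SL"
    unfolding R_def C_add Ln_add SL_def by simp
  have R_le: "R \<alpha> (k + m) t \<le> Mx \<alpha> k - (Mx \<alpha> k - mn \<alpha> k) * (Ln k g0 / SL)"
  proof -
    have e: "Mx \<alpha> k - (Mx \<alpha> k - mn \<alpha> k) * (Ln k g0 / SL) = (Mx \<alpha> k * SL - (Mx \<alpha> k - mn \<alpha> k) * Ln k g0) / SL"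
      using pos by (simp add: field_simps)
    show ?thesis unfolding R_eq e using up pos by (intro divide_right_mono) auto
  qed
  have SL_eq: "SL = Ln (k + m) t" unfolding SL_def Ln_add ..
  have a1: "lam ^ k * hmin \<le> hmax * Ln k g0"
    using Ln_lower[OF g0(1), of k] hmin_le[OF g0(1)] lam_pos
    by (meson mult_left_mono order.trans zero_le_power less_imp_le)
  have a2: "hmin * SL \<le> lam ^ (k + m) * hmax"
    using Ln_upper[OF t(1), of "k + m"] hmax_ge[OF t(1)] lam_pos SL_eq
    by (metis mult_left_mono order.trans zero_le_power less_imp_le)
  have "del \<le> Ln k g0 / SL"
  proof -
    have lk: "lam ^ k > 0" "lam ^ m > 0" using lam_pos by auto
    have "del * SL = hmin ^ 2 * SL / (hmax ^ 2 * lam ^ m)" by (simp add: del_def power_divide)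
    also have "\<dots> \<le> hmin * (lam ^ (k + m) * hmax) / (hmax ^ 2 * lam ^ m)"
      using a2 hmin_pos hmax_pos lk
      by (intro divide_right_mono) (auto simp: power2_eq_square mult.assoc intro: mult_left_mono)
    also have "\<dots> = lam ^ k * hmin / hmax"
      using hmax_pos lk lam_pos by (simp add: power_add power2_eq_square field_simps)
    also have "\<dots> \<le> Ln k g0"
      using a1 hmax_pos by (simp add: divide_le_eq mult.commute)
    finally show ?thesis using pos by (simp add: le_divide_eq)
  qed
  moreover have "Mx \<alpha> k - mn \<alpha> k \<ge> 0" using R_in[OF g0(1), of \<alpha> k] by linarith
  ultimately have "(Mx \<alpha> k - mn \<alpha> k) * del \<le> (Mx \<alpha> k - mn \<alpha> k) * (Ln k g0 / SL)"
    by (intro mult_left_mono)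
  then show ?thesis using R_le t(2) by (simp add: algebra_simps)
qed

end


context prim_subst
begin

lemma R_conv: "\<exists>th. \<forall>t\<in>S. (\<lambda>k. R \<alpha> k t) \<longlonglongrightarrow> th"
proof -
  obtain t0 where t0: "t0 \<in> S" using neS by blast
  have dec: "decseq (Mx \<alpha>)" unfolding decseq_def
  proof (intro allI impI)
    fix i j :: nat assume "i \<le> j"
    then obtain dd where "j = i + dd" using le_Suc_ex by blast
    then show "Mx \<alpha> j \<le> Mx \<alpha> i" using Mx_dec by simp
  qed
  have inc: "incseq (mn \<alpha>)" unfolding incseq_def
  proof (intro allI impI)
    fix i j :: nat assume "i \<le> j"
    then obtain dd where "j = i + dd" using le_Suc_ex by blast
    then show "mn \<alpha> i \<le> mn \<alpha> j" using mn_inc by simp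
  qed
  have mnMx: "mn \<alpha> k \<le> Mx \<alpha> k" for k using R_in[OF t0, of \<alpha> k] by linarith
  have b1: "\<forall>i. mn \<alpha> 0 \<le> Mx \<alpha> i" proof
    fix i show "mn \<alpha> 0 \<le> Mx \<alpha> i" using mn_inc[of \<alpha> 0 i] mnMx[of i] by simp
  qed
  have b2: "\<forall>i. mn \<alpha> i \<le> Mx \<alpha> 0" proof
    fix i show "mn \<alpha> i \<le> Mx \<alpha> 0" using Mx_dec[of \<alpha> 0 i] mnMx[of i] by simp
  qed
  obtain LM where LM: "Mx \<alpha> \<longlonglongrightarrow> LM" using decseq_convergent[OF dec b1] by blast
  obtain Lm where Lm: "mn \<alpha> \<longlonglongrightarrow> Lm" using incseq_convergent[OF inc b2] by blast
  define D where "D k = Mx \<alpha> k - mn \<alpha> k" for k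
  define e where "e = min del (1/2)"
  have e: "0 < e" "e \<le> 1/2" using del_pos by (auto simp: e_def)
  have D0: "D k \<ge> 0" for k using mnMx[of k] by (simp add: D_def)
  have Dstep: "D (k + m) \<le> (1 - e) * D k" for k
  proof -
    have "D (k + m) \<le> Mx \<alpha> k - del * D k - mn \<alpha> k"
      using contr[of \<alpha> k] mn_inc[of \<alpha> k m] by (simp add: D_def)
    also have "\<dots> \<le> (1 - e) * D k"
      using D0[of k] mult_right_mono[of e del "D k"] by (simp add: D_def e_def algebra_simps)
    finally show ?thesis .
  qed
  have Dpow: "D (j * m) \<le> (1 - e) ^ j * D 0" for j
  proof (induction j)
    case (Suc j)
    have "D (Suc j * m) = D (j * m + m)" by (simp add: add.commute)
    also have "\<dots> \<le> (1 - e) * D (j * m)" by (rule Dstep)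
    also have "\<dots> \<le> (1 - e) * ((1 - e) ^ j * D 0)" using Suc e by (intro mult_left_mono) auto
    finally show ?case by simp
  qed simp
  have "(\<lambda>j. (1 - e) ^ j * D 0) \<longlonglongrightarrow> 0 * D 0"
    using e by (intro tendsto_intros) auto
  then have up0: "(\<lambda>j. (1 - e) ^ j * D 0) \<longlonglongrightarrow> 0" by simp
  have sub0: "(\<lambda>j. D (j * m)) \<longlonglongrightarrow> 0"
    by (rule tendsto_sandwich[OF always_eventually always_eventually tendsto_const up0])
       (use Dpow D0 in auto)
  have DL: "D \<longlonglongrightarrow> LM - Lm" unfolding D_def using LM Lm by (intro tendsto_intros)
  have sm: "strict_mono (\<lambda>j. j * m)" using mpos by (simp add: strict_mono_def)
  have "(D \<circ> (\<lambda>j. j * m)) \<longlonglongrightarrow> LM - Lm" using LIMSEQ_subseq_LIMSEQ[OF DL sm] .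
  then have "(\<lambda>j. D (j * m)) \<longlonglongrightarrow> LM - Lm" by (simp add: comp_def)
  then have "LM - Lm = 0" using sub0 by (rule LIMSEQ_unique)
  then have eq: "LM = Lm" by simp
  have "\<forall>t\<in>S. (\<lambda>k. R \<alpha> k t) \<longlonglongrightarrow> LM"
  proof
    fix t assume t: "t \<in> S"
    show "(\<lambda>k. R \<alpha> k t) \<longlonglongrightarrow> LM"
    proof (rule tendsto_sandwich[OF always_eventually always_eventually Lm[unfolded eq[symmetric]] LM])
      show "\<forall>k. mn \<alpha> k \<le> R \<alpha> k t" using R_in[OF t] by blast
      show "\<forall>k. R \<alpha> k t \<le> Mx \<alpha> k" using R_in[OF t] by blast
    qed
  qed
  then show ?thesis by blast
qed


end


context prim_subst
begin

lemma sum_list_diff_mult: "sum_list (map (\<lambda>g. f g - th * l g) L) = sum_list (map f L) - th * sum_list (map l L)"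
  for f l :: "'l \<Rightarrow> real"
  by (induction L) (auto simp: algebra_simps)

lemma ident:
  assumes mu: "\<forall>f. (\<Sum>t\<in>S. \<mu> t * sum_list (map f (\<sigma> t))) = lam * (\<Sum>t\<in>S. \<mu> t * f t)"
    and aS: "\<alpha> \<in> S" and conv: "\<forall>t\<in>S. (\<lambda>k. R \<alpha> k t) \<longlonglongrightarrow> th"
  shows "th * (\<Sum>t\<in>S. \<mu> t) = \<mu> \<alpha>"
proof -
  define F where "F k t = C \<alpha> k t - th * Ln k t" for k t
  have FS: "F (Suc k) t = sum_list (map (F k) (\<sigma> t))" for k t
    unfolding F_def C_Suc Ln_Suc by (simp add: sum_list_diff_mult)
  define G where "G k = (\<Sum>t\<in>S. \<mu> t * F k t)" for k
  have GS: "G (Suc k) = lam * G k" for k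
    unfolding G_def FS using mu by simp
  have Gp: "G k = lam ^ k * G 0" for k by (induction k) (auto simp: GS)
  have Fl: "(\<lambda>k. F k t / lam ^ k) \<longlonglongrightarrow> 0" if t: "t \<in> S" for t
  proof -
    have bnd: "\<bar>F k t / lam ^ k\<bar> \<le> (h t / hmin) * \<bar>R \<alpha> k t - th\<bar>" for k
    proof -
      have lp: "lam ^ k > 0" using lam_pos by simp
      have Fe: "F k t = Ln k t * (R \<alpha> k t - th)"
        using Ln_pos[OF t, of k] by (simp add: F_def R_def algebra_simps)
      have "Ln k t / lam ^ k \<le> h t / hmin"
        using Ln_upper[OF t, of k] hmin_pos lp by (simp add: divide_le_eq le_divide_eq mult.commute)
      moreover have "Ln k t / lam ^ k \<ge> 0" using Ln_pos[OF t, of k] lp by simp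
      ultimately have "(Ln k t / lam ^ k) * \<bar>R \<alpha> k t - th\<bar> \<le> (h t / hmin) * \<bar>R \<alpha> k t - th\<bar>"
        by (intro mult_right_mono) auto
      moreover have "\<bar>F k t / lam ^ k\<bar> = (Ln k t / lam ^ k) * \<bar>R \<alpha> k t - th\<bar>"
        unfolding Fe using lp Ln_pos[OF t, of k] by (simp add: abs_mult abs_divide)
      ultimately show ?thesis by simp
    qed
    have "(\<lambda>k. (h t / hmin) * \<bar>R \<alpha> k t - th\<bar>) \<longlonglongrightarrow> (h t / hmin) * \<bar>th - th\<bar>"
      using conv t by (intro tendsto_intros) auto
    then have g0: "(\<lambda>k. (h t / hmin) * \<bar>R \<alpha> k t - th\<bar>) \<longlonglongrightarrow> 0" by simp
    have g1: "(\<lambda>k. - ((h t / hmin) * \<bar>R \<alpha> k t - th\<bar>)) \<longlonglongrightarrow> 0"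
      using tendsto_minus[OF g0] by (simp only: minus_zero)
    show ?thesis
    proof (rule tendsto_sandwich[OF always_eventually always_eventually g1 g0])
      show "\<forall>k. - (h t / hmin * \<bar>R \<alpha> k t - th\<bar>) \<le> F k t / lam ^ k"
      proof
        fix k show "- (h t / hmin * \<bar>R \<alpha> k t - th\<bar>) \<le> F k t / lam ^ k"
          using abs_le_D2[OF bnd[of k]] by linarith
      qed
      show "\<forall>k. F k t / lam ^ k \<le> h t / hmin * \<bar>R \<alpha> k t - th\<bar>"
      proof
        fix k show "F k t / lam ^ k \<le> h t / hmin * \<bar>R \<alpha> k t - th\<bar>"
          using abs_le_D1[OF bnd[of k]] by linarith
      qed
    qed
  qed
  have "(\<lambda>k. \<Sum>t\<in>S. \<mu> t * (F k t / lam ^ k)) \<longlonglongrightarrow> (\<Sum>t\<in>S. \<mu> t * 0)"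
    using Fl by (intro tendsto_intros) auto
  moreover have "(\<Sum>t\<in>S. \<mu> t * (F k t / lam ^ k)) = G 0" for k
  proof -
    have "(\<Sum>t\<in>S. \<mu> t * (F k t / lam ^ k)) = G k / lam ^ k"
      by (simp add: G_def sum_divide_distrib)
    then show ?thesis using Gp[of k] lam_pos by simp
  qed
  ultimately have "G 0 = 0" by (simp add: LIMSEQ_const_iff)
  moreover have "G 0 = \<mu> \<alpha> - th * (\<Sum>t\<in>S. \<mu> t)"
  proof -
    have "G 0 = (\<Sum>t\<in>S. (if t = \<alpha> then \<mu> t else 0) - th * \<mu> t)"
      unfolding G_def F_def C_def Ln_def by (intro sum.cong) (auto simp: cnt_def algebra_simps)
    also have "\<dots> = (\<Sum>t\<in>S. (if t = \<alpha> then \<mu> t else 0)) - (\<Sum>t\<in>S. th * \<mu> t)"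
      by (rule sum_subtractf)
    also have "\<dots> = \<mu> \<alpha> - th * (\<Sum>t\<in>S. \<mu> t)"
      using aS finS by (simp add: sum_distrib_left)
    finally show ?thesis .
  qed
  ultimately show ?thesis by simp
qed


end


context prim_subst
begin

lemma th_bounds:
  assumes "t \<in> S" "(\<lambda>k. R \<alpha> k t) \<longlonglongrightarrow> th"
  shows "0 \<le> th \<and> th \<le> 1"
proof
  show "0 \<le> th"
    by (rule LIMSEQ_le_const[OF assms(2)]) (use R_bounds[OF assms(1)] in blast)
  show "th \<le> 1"
    by (rule LIMSEQ_le_const2[OF assms(2)]) (use R_bounds[OF assms(1)] in blast)
qed

lemma pref_freq:
  assumes fp: "is_fixed_point \<sigma> w" and inS: "\<forall>i. w i \<in> S"
    and conv: "\<forall>t\<in>S. (\<lambda>k. R \<alpha> k t) \<longlonglongrightarrow> th"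
  shows "(\<lambda>N. real (cnt \<alpha> (pref w N)) / real N) \<longlonglongrightarrow> th"
proof (rule LIMSEQ_I)
  fix eps :: real assume eps: "eps > 0"
  obtain t0 where t0: "t0 \<in> S" using neS by blast
  have thb: "0 \<le> th \<and> th \<le> 1" using th_bounds[OF t0] conv t0 by blast
  have "\<forall>\<^sub>F k in sequentially. \<forall>t\<in>S. \<bar>R \<alpha> k t - th\<bar> < eps / 2"
  proof (rule eventually_ball_finite[OF finS], rule ballI)
    fix t assume "t \<in> S"
    then have "(\<lambda>k. R \<alpha> k t) \<longlonglongrightarrow> th" using conv by blast
    then have tt: "\<forall>e>0. \<forall>\<^sub>F k in sequentially. dist (R \<alpha> k t) th < e"
      by (simp add: tendsto_iff)
    have e2: "eps / 2 > 0" using eps by simp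
    have "\<forall>\<^sub>F k in sequentially. dist (R \<alpha> k t) th < eps / 2"
      using tt e2 by blast
    then show "\<forall>\<^sub>F k in sequentially. \<bar>R \<alpha> k t - th\<bar> < eps / 2"
      by (simp add: dist_real_def)
  qed
  then obtain K where K: "\<forall>t\<in>S. \<bar>R \<alpha> K t - th\<bar> < eps / 2"
    by (auto simp: eventually_sequentially)
  define Ls where "Ls = (\<Sum>t\<in>S. Ln K t)"
  have Ls0: "Ls \<ge> 0" unfolding Ls_def using Ln_pos by (intro sum_nonneg) (simp add: less_imp_le)
  obtain N0 :: nat where N0: "real N0 > 2 * Ls / eps" using reals_Archimedean2 by blast
  show "\<exists>no. \<forall>N\<ge>no. norm (real (cnt \<alpha> (pref w N)) / real N - th) < eps"
  proof (intro exI[of _ "Suc N0"] allI impI)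
    fix N assume N: "N \<ge> Suc N0"
    have cl': "\<forall>t\<in>S. \<sigma> t \<noteq> [] \<and> set (\<sigma> t) \<subseteq> S" using cl .
    obtain n r where nr: "r < length (morph_pow \<sigma> K (w n))"
      "pref w N = Mk \<sigma> K (pref w n) @ take r (morph_pow \<sigma> K (w n))"
      using decomp[OF fp cl' inS] by blast
    let ?P = "pref w n"
    define A where "A = real (cnt \<alpha> (Mk \<sigma> K ?P))"
    define B where "B = real (length (Mk \<sigma> K ?P))"
    define A' where "A' = real (cnt \<alpha> (take r (morph_pow \<sigma> K (w n))))"
    have A_eq: "A = sum_list (map (C \<alpha> K) ?P)"
      unfolding A_def Mk_def cnt_concat_map real_sum_list_map C_def by simp
    have B_eq: "B = sum_list (map (Ln K) ?P)"
      unfolding B_def Mk_def length_concat_map real_sum_list_map Ln_def by simp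
    have setP: "set ?P \<subseteq> S" using inS by (auto simp: pref_def)
    have err1: "\<bar>A - th * B\<bar> \<le> eps / 2 * B"
      unfolding A_eq B_eq
    proof (intro sum_list_abs_err ballI)
      fix t assume "t \<in> set ?P" then have t: "t \<in> S" using setP by auto
      have "C \<alpha> K t - th * Ln K t = Ln K t * (R \<alpha> K t - th)"
        using Ln_pos[OF t, of K] by (simp add: R_def algebra_simps)
      then have "\<bar>C \<alpha> K t - th * Ln K t\<bar> = Ln K t * \<bar>R \<alpha> K t - th\<bar>"
        using Ln_pos[OF t, of K] by (simp add: abs_mult)
      moreover have "Ln K t * \<bar>R \<alpha> K t - th\<bar> \<le> Ln K t * (eps / 2)"
        using K t Ln_pos[OF t, of K] by (intro mult_left_mono) auto
      ultimately show "\<bar>C \<alpha> K t - th * Ln K t\<bar> \<le> eps / 2 * Ln K t" by (simp add: mult.commute)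
    qed
    have rle: "real r \<le> Ls"
    proof -
      have "real r \<le> Ln K (w n)" using nr(1) by (simp add: Ln_def)
      also have "\<dots> \<le> Ls" unfolding Ls_def using inS finS Ln_pos
        by (intro member_le_sum) (auto simp: less_imp_le)
      finally show ?thesis .
    qed
    have A'r: "0 \<le> A'" "A' \<le> real r"
      unfolding A'_def using cnt_le[of \<alpha> "take r (morph_pow \<sigma> K (w n))"] nr(1) by auto
    have tr: "0 \<le> th * real r" "th * real r \<le> real r"
      using thb mult_left_le_one_le[of "real r" th] by auto
    have err2: "\<bar>A' - th * real r\<bar> \<le> real r"
      using A'r tr by linarith
    have "N = length (Mk \<sigma> K ?P) + r"
      using arg_cong[OF nr(2), of length] nr(1) by simp
    then have NBr: "real N = B + real r" unfolding B_def by simp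
    have cN: "real (cnt \<alpha> (pref w N)) = A + A'" unfolding A_def A'_def nr(2) by simp
    have Npos: "real N > 0" using N by simp
    have "\<bar>real (cnt \<alpha> (pref w N)) - th * real N\<bar> \<le> eps / 2 * B + Ls"
    proof -
      have ee: "(A + A') - th * (B + real r) = (A - th * B) + (A' - th * real r)"
        by (simp add: algebra_simps)
      have "\<bar>(A + A') - th * (B + real r)\<bar> \<le> \<bar>A - th * B\<bar> + \<bar>A' - th * real r\<bar>"
        unfolding ee by (rule abs_triangle_ineq)
      then show ?thesis unfolding cN NBr using err1 err2 rle by linarith
    qed
    also have "\<dots> \<le> eps / 2 * real N + Ls"
    proof -
      have "B \<le> real N" using NBr by simp
      then have "eps / 2 * B \<le> eps / 2 * real N" using eps by (intro mult_left_mono) auto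
      then show ?thesis by simp
    qed
    also have "\<dots> < eps * real N"
    proof -
      have "2 * Ls / eps < real N" using N0 N by simp
      then have "2 * Ls < eps * real N" using eps by (simp add: divide_less_eq mult.commute)
      then show ?thesis by simp
    qed
    finally have "\<bar>real (cnt \<alpha> (pref w N)) - th * real N\<bar> < eps * real N" .
    moreover have "real (cnt \<alpha> (pref w N)) / real N - th = (real (cnt \<alpha> (pref w N)) - th * real N) / real N"
      using Npos by (simp add: diff_divide_distrib)
    ultimately have "\<bar>real (cnt \<alpha> (pref w N)) / real N - th\<bar> < eps"
      using Npos by (simp add: abs_divide divide_less_eq)
    then show "norm (real (cnt \<alpha> (pref w N)) / real N - th) < eps" by simp
  qed
qed


end


lemma lin_dep:
  fixes v :: "nat \<Rightarrow> 'b \<Rightarrow> 'a::field"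
  assumes "finite A" "n > card A"
  shows "\<exists>r. (\<exists>i<n. r i \<noteq> 0) \<and> (\<forall>t\<in>A. (\<Sum>i<n. r i * v i t) = 0)"
  using assms
proof (induction A arbitrary: n v rule: finite_induct)
  case empty
  then show ?case by (intro exI[of _ "\<lambda>i. if i = 0 then 1 else 0"]) auto
next
  case (insert bb A)
  show ?case
  proof (cases "\<forall>i<n. v i bb = 0")
    case True
    have "n > card A" using insert by simp
    then obtain r where r: "\<exists>i<n. r i \<noteq> 0" "\<forall>t\<in>A. (\<Sum>i<n. r i * v i t) = 0"
      using insert.IH by blast
    have "(\<Sum>i<n. r i * v i bb) = 0" using True by simp
    then show ?thesis using r by auto
  next
    case False
    then obtain j where j: "j < n" "v j bb \<noteq> 0" by blast
    define n' where "n' = n - 1"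
    have nn: "n = Suc n'" using j n'_def by simp
    have n'A: "n' > card A" using insert nn by simp
    define sw where "sw i = (if i = j then n' else if i = n' then j else i)" for i
    have swsw: "sw (sw i) = i" for i by (simp add: sw_def)
    have swlt: "i < n \<Longrightarrow> sw i < n" for i using j nn by (auto simp: sw_def)
    define u where "u i = v (sw i)" for i
    have un: "u n' bb \<noteq> 0" using j by (simp add: u_def sw_def)
    define cc where "cc i = u i bb / u n' bb" for i
    define ws where "ws i t = u i t - cc i * u n' t" for i t
    obtain r' where r': "\<exists>i<n'. r' i \<noteq> 0" "\<forall>t\<in>A. (\<Sum>i<n'. r' i * ws i t) = 0"
      using insert.IH[OF n'A, of ws] by blast
    define r0 where "r0 i = (if i < n' then r' i else - (\<Sum>i<n'. r' i * cc i))" for i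
    have key: "(\<Sum>i<n. r0 i * u i t) = (\<Sum>i<n'. r' i * ws i t)" for t
    proof -
      have "(\<Sum>i<n. r0 i * u i t) = (\<Sum>i<n'. r' i * u i t) - (\<Sum>i<n'. r' i * cc i) * u n' t"
        unfolding nn by (simp add: r0_def)
      also have "\<dots> = (\<Sum>i<n'. r' i * ws i t)"
        by (simp add: ws_def algebra_simps sum_subtractf sum_distrib_right sum_distrib_left)
      finally show ?thesis .
    qed
    have wsb: "ws i bb = 0" for i using un by (simp add: ws_def cc_def)
    define r where "r i = r0 (sw i)" for i
    have reidx: "(\<Sum>i<n. r i * v i t) = (\<Sum>i<n. r0 i * u i t)" for t
      by (rule sum.reindex_bij_witness[where i=sw and j=sw])
         (auto simp: swsw swlt r_def u_def)
    show ?thesis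
    proof (intro exI[of _ r] conjI)
      obtain i where i: "i < n'" "r' i \<noteq> 0" using r' by blast
      have "sw i < n" using i nn swlt by simp
      moreover have "r (sw i) \<noteq> 0" using i by (simp add: r_def swsw r0_def)
      ultimately show "\<exists>i<n. r i \<noteq> 0" by blast
      show "\<forall>t\<in>insert bb A. (\<Sum>i<n. r i * v i t) = 0"
        using r'(2) wsb by (auto simp: reidx key)
    qed
  qed
qed

lemma sum_sum_list_swap:
  fixes r :: "nat \<Rightarrow> 'a::comm_ring"
  shows "(\<Sum>i<n. r i * sum_list (map (f i) L)) = sum_list (map (\<lambda>g. \<Sum>i<n. r i * f i g) L)"
  by (induction L) (auto simp: sum.distrib distrib_left)

lemma of_nat_filter_concat:
  "(of_nat (length (filter P (concat (map f L)))) :: 'a::semiring_1) = sum_list (map (\<lambda>g. of_nat (length (filter P (f g)))) L)"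
  by (induction L) auto

lemma sum_list_zero: "\<forall>g\<in>set L. f g = 0 \<Longrightarrow> sum_list (map f L) = (0::'a::monoid_add)"
  by (induction L) auto

lemma auto_rec:
  fixes \<phi> :: "nat \<Rightarrow> nat list"
  assumes finA: "finite A" and clA: "\<forall>t\<in>A. set (\<phi> t) \<subseteq> A" and u0: "u0 \<in> A"
  shows "\<exists>n r. (\<exists>i<n. r i \<noteq> (0::rat)) \<and>
     (\<forall>k. (\<Sum>i<n. r i * of_nat (length (filter P (morph_pow \<phi> (k + i) u0)))) = 0)"
proof -
  define c where "c k t = (of_nat (length (filter P (morph_pow \<phi> k t))) :: rat)" for k t
  have cS: "c (Suc k) t = sum_list (map (c k) (\<phi> t))" for k t
    unfolding c_def mp_Suc' by (rule of_nat_filter_concat)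
  obtain r where r: "\<exists>i<Suc (card A). r i \<noteq> 0" "\<forall>t\<in>A. (\<Sum>i<Suc (card A). r i * c i t) = 0"
    using lin_dep[OF finA, of "Suc (card A)" c] by auto
  have all: "\<forall>t\<in>A. (\<Sum>i<Suc (card A). r i * c (k + i) t) = 0" for k
  proof (induction k)
    case 0 then show ?case using r by simp
  next
    case (Suc k)
    show ?case
    proof
      fix t assume t: "t \<in> A"
      have "(\<Sum>i<Suc (card A). r i * c (Suc k + i) t) =
            (\<Sum>i<Suc (card A). r i * sum_list (map (c (k + i)) (\<phi> t)))"
        by (simp add: cS)
      also have "\<dots> = sum_list (map (\<lambda>g. \<Sum>i<Suc (card A). r i * c (k + i) g) (\<phi> t))"
        by (rule sum_sum_list_swap)
      also have "\<dots> = 0" using Suc clA t by (intro sum_list_zero) auto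
      finally show "(\<Sum>i<Suc (card A). r i * c (Suc k + i) t) = 0" .
    qed
  qed
  show ?thesis using r(1) all u0 unfolding c_def by blast
qed


context
  fixes a :: "nat \<Rightarrow> real" and th :: real
  assumes arat: "\<forall>k. a k \<in> \<rat>" and alim: "a \<longlonglongrightarrow> th"
begin

definition ev :: "rat poly \<Rightarrow> nat \<Rightarrow> real" where
  "ev p k = (\<Sum>i<Suc (degree p). of_rat (coeff p i) * a (k + i))"

lemma ev_bound:
  assumes "N \<ge> Suc (degree p)"
  shows "ev p k = (\<Sum>i<N. of_rat (coeff p i) * a (k + i))"
proof -
  have "(\<Sum>i<N. of_rat (coeff p i) * a (k + i)) = (\<Sum>i<Suc (degree p). of_rat (coeff p i) * a (k + i))"
    using assms by (intro sum.mono_neutral_right) (auto simp: coeff_eq_0)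
  then show ?thesis by (simp add: ev_def)
qed

lemma ev_rat: "ev p k \<in> \<rat>"
  unfolding ev_def using arat by (intro Rats_sum Rats_mult) auto

lemma ev_lim: "(\<lambda>k. ev p k) \<longlonglongrightarrow> of_rat (poly p 1) * th"
proof -
  have "(\<lambda>k. \<Sum>i<Suc (degree p). of_rat (coeff p i) * a (k + i)) \<longlonglongrightarrow> (\<Sum>i<Suc (degree p). of_rat (coeff p i) * th)"
  proof (intro tendsto_sum tendsto_mult tendsto_const)
    fix i show "(\<lambda>k. a (k + i)) \<longlonglongrightarrow> th" using alim by (rule LIMSEQ_ignore_initial_segment)
  qed
  moreover have "(\<Sum>i<Suc (degree p). of_rat (coeff p i) * th) = of_rat (poly p 1) * th"
    by (simp add: poly_altdef lessThan_Suc_atMost of_rat_sum sum_distrib_right)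
  ultimately show ?thesis by (simp add: ev_def)
qed

lemma lin_mult: "[:-1, 1:] * hq = pCons 0 hq - (hq :: rat poly)"
  by (simp add: mult_pCons_left smult_minus_left)

lemma ev_mult: "ev ([:-1, 1:] * hq) k = ev hq (Suc k) - ev hq k"
proof (cases "hq = 0")
  case True then show ?thesis by (simp add: ev_def)
next
  case False
  define M where "M = Suc (degree hq)"
  have dg: "degree ([:-1, 1:] * hq) = Suc (degree hq)"
    using False degree_mult_eq[of "[:-1, 1:]" hq] by simp
  have cf: "coeff ([:-1, 1:] * hq) i = coeff (pCons 0 hq) i - coeff hq i" for i
    by (simp only: lin_mult coeff_diff)
  have "ev ([:-1, 1:] * hq) k = (\<Sum>i<Suc M. of_rat (coeff ([:-1, 1:] * hq) i) * a (k + i))"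
    by (rule ev_bound) (unfold dg M_def, simp)
  also have "\<dots> = (\<Sum>i<Suc M. of_rat (coeff (pCons 0 hq - hq) i) * a (k + i))"
    by (simp only: cf coeff_diff)
  also have "\<dots> = (\<Sum>i<Suc M. of_rat (coeff (pCons 0 hq) i) * a (k + i)) - (\<Sum>i<Suc M. of_rat (coeff hq i) * a (k + i))"
    by (simp add: of_rat_diff left_diff_distrib sum_subtractf)
  also have "(\<Sum>i<Suc M. of_rat (coeff (pCons 0 hq) i) * a (k + i)) = (\<Sum>i<M. of_rat (coeff hq i) * a (Suc k + i))"
    by (subst sum.lessThan_Suc_shift) simp
  also have "\<dots> = ev hq (Suc k)" by (simp add: ev_def M_def)
  also have "(\<Sum>i<Suc M. of_rat (coeff hq i) * a (k + i)) = ev hq k"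
    by (rule ev_bound[symmetric]) (simp add: M_def)
  finally show ?thesis .
qed

lemma ev_rat_lim: "p \<noteq> 0 \<Longrightarrow> (\<forall>k. ev p k = 0) \<Longrightarrow> th \<in> \<rat>"
proof (induction "degree p" arbitrary: p rule: less_induct)
  case less
  show ?case
  proof (cases "poly p 1 = 0")
    case False
    have z: "(\<lambda>k. ev p k) \<longlonglongrightarrow> 0" using less.prems(2) by simp
    have "of_rat (poly p 1) * th = 0" by (rule LIMSEQ_unique[OF ev_lim[of p] z])
    then show ?thesis using False by simp
  next
    case True
    then have "[:- 1, 1:] dvd p" using poly_eq_0_iff_dvd[of p 1] by blast
    then obtain hq where p: "p = [:-1, 1:] * hq" by (elim dvdE)
    have hq0: "hq \<noteq> 0" using less.prems(1) p by (metis mult_zero_right)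
    have "degree p = degree ([:-1, 1:] :: rat poly) + degree hq" unfolding p
      by (rule degree_mult_eq) (use hq0 in auto)
    then have dg: "degree hq < degree p" by simp
    have step: "ev hq (Suc k) = ev hq k" for k
    proof -
      have "ev p k = 0" using less.prems(2) by blast
      then have "ev ([:-1, 1:] * hq) k = 0" using p by blast
      then show ?thesis using ev_mult[of hq k] by linarith
    qed
    have const: "ev hq k = ev hq 0" for k by (induction k) (auto simp: step)
    have "(\<lambda>k. ev hq k) \<longlonglongrightarrow> of_rat (poly hq 1) * th" by (rule ev_lim)
    moreover have "\<forall>\<^sub>F k in sequentially. ev hq k = ev hq 0" by (intro always_eventually allI const)
    ultimately have "(\<lambda>k. ev hq 0) \<longlonglongrightarrow> of_rat (poly hq 1) * th"
      by (rule Lim_transform_eventually)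
    then have eq: "ev hq 0 = of_rat (poly hq 1) * th" by (simp add: LIMSEQ_const_iff)
    show ?thesis
    proof (cases "poly hq 1 = 0")
      case False
      have "th = ev hq 0 / of_rat (poly hq 1)" using eq False by (simp add: field_simps)
      then show ?thesis using ev_rat by (simp add: Rats_divide)
    next
      case True
      have "\<forall>k. ev hq k = 0"
      proof
        fix k show "ev hq k = 0" using const[of k] eq True by simp
      qed
      then show ?thesis using less.hyps[OF dg hq0] by blast
    qed
  qed
qed

lemma rec_lim_rat:
  fixes r :: "nat \<Rightarrow> rat"
  assumes nz: "\<exists>i<n. r i \<noteq> 0" and rec: "\<forall>k. (\<Sum>i<n. of_rat (r i) * a (k + i)) = 0"
  shows "th \<in> \<rat>"
proof -
  define p where "p = Poly (map r [0..<n])"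
  have cp: "coeff p i = (if i < n then r i else 0)" for i
    by (simp add: p_def nth_default_def)
  have p0: "p \<noteq> 0" using nz cp by (metis coeff_0)
  have "ev p k = 0" for k
  proof -
    define N where "N = max n (Suc (degree p))"
    have "ev p k = (\<Sum>i<N. of_rat (coeff p i) * a (k + i))" by (rule ev_bound) (simp add: N_def)
    also have "\<dots> = (\<Sum>i<n. of_rat (coeff p i) * a (k + i))"
      by (intro sum.mono_neutral_right) (auto simp: N_def cp)
    also have "\<dots> = 0" using rec by (simp add: cp)
    finally show ?thesis .
  qed
  then show ?thesis using ev_rat_lim[OF p0] by blast
qed

end


lemma length_mw_pref:
  assumes "\<forall>t\<in>A. length (\<phi> t) = q" "\<forall>n. u n \<in> A"
  shows "length (morph_word \<phi> (pref u n)) = q * n"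
proof (induction n)
  case (Suc n)
  then show ?case using assms by (simp add: pref_Suc morph_word_def)
qed (simp add: morph_word_def)

lemma pref_uniform:
  assumes fpu: "is_fixed_point \<phi> u" and len: "\<forall>t\<in>A. length (\<phi> t) = q" and uA: "\<forall>n. u n \<in> A"
  shows "pref u (q ^ k) = morph_pow \<phi> k (u 0)"
proof (induction k)
  case 0 then show ?case by (simp add: pref_def)
next
  case (Suc k)
  have "pref u (q ^ Suc k) = pref u (length (morph_word \<phi> (pref u (q ^ k))))"
    using length_mw_pref[OF len uA, of "q ^ k"] by (simp add: mult.commute)
  also have "\<dots> = morph_word \<phi> (pref u (q ^ k))"
    using fpu unfolding is_fixed_point_def by metis
  also have "\<dots> = morph_pow \<phi> (Suc k) (u 0)" using Suc by simp
  finally show ?case .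
qed

lemma auto_lim_rat:
  assumes qa: "q_automatic q w" and q2: "q \<ge> 2"
    and lim: "(\<lambda>k. real (cnt \<alpha> (pref w (q ^ k))) / real (q ^ k)) \<longlonglongrightarrow> th"
  shows "th \<in> \<rat>"
proof -
  obtain A :: "nat set" and \<phi> :: "nat \<Rightarrow> nat list" and u :: "nat \<Rightarrow> nat" and \<tau> where fin: "finite A" and cl: "\<forall>t\<in>A. length (\<phi> t) = q \<and> set (\<phi> t) \<subseteq> A"
    and uA: "\<forall>n. u n \<in> A" and fpu: "is_fixed_point \<phi> u" and wt: "\<forall>n. w n = \<tau> (u n)"
    using qa unfolding q_automatic_def by blast
  define P where "P = (\<lambda>g. \<alpha> = \<tau> g)"
  have cntw: "cnt \<alpha> (pref w N) = length (filter P (pref u N))" for N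
  proof -
    have "pref w N = map \<tau> (pref u N)" using wt by (simp add: pref_def)
    then show ?thesis by (simp add: cnt_def filter_map P_def comp_def)
  qed
  have len: "\<forall>t\<in>A. length (\<phi> t) = q" using cl by blast
  have clA: "\<forall>t\<in>A. set (\<phi> t) \<subseteq> A" using cl by blast
  have ck: "cnt \<alpha> (pref w (q ^ k)) = length (filter P (morph_pow \<phi> k (u 0)))" for k
    using cntw pref_uniform[OF fpu len uA] by simp
  obtain n r where nz: "\<exists>i<n. r i \<noteq> (0::rat)"
    and rec: "\<forall>k. (\<Sum>i<n. r i * of_nat (length (filter P (morph_pow \<phi> (k + i) (u 0))))) = 0"
    using auto_rec[OF fin clA uA[rule_format, of 0], of P] by blast
  define a where "a k = real (cnt \<alpha> (pref w (q ^ k))) / real (q ^ k)" for k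
  define L where "L k = length (filter P (morph_pow \<phi> k (u 0)))" for k
  have aL: "a k = real (L k) / real q ^ k" for k by (simp add: a_def L_def ck)
  have arat: "\<forall>k. a k \<in> \<rat>" unfolding aL by (auto intro: Rats_divide)
  have qpos: "real q > 0" using q2 by simp
  define r' where "r' i = r i * of_nat (q ^ i)" for i
  have nz': "\<exists>i<n. r' i \<noteq> 0" using nz q2 by (auto simp: r'_def)
  have rec': "\<forall>k. (\<Sum>i<n. of_rat (r' i) * a (k + i)) = 0"
  proof
    fix k
    have "(\<Sum>i<n. of_rat (r' i) * a (k + i)) = (\<Sum>i<n. of_rat (r i * of_nat (L (k + i)))) / real q ^ k"
      unfolding sum_divide_distrib
    proof (intro sum.cong refl)
      fix i
      show "of_rat (r' i) * a (k + i) = of_rat (r i * of_nat (L (k + i))) / real q ^ k"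
        using qpos by (simp add: r'_def aL of_rat_mult of_rat_power power_add field_simps)
    qed
    also have "\<dots> = of_rat (\<Sum>i<n. r i * of_nat (L (k + i))) / real q ^ k"
      by (simp add: of_rat_sum)
    also have "\<dots> = 0" using rec by (simp add: L_def)
    finally show "(\<Sum>i<n. of_rat (r' i) * a (k + i)) = 0" .
  qed
  have alim: "a \<longlonglongrightarrow> th" using lim unfolding a_def .
  show ?thesis using rec_lim_rat[OF arat alim nz' rec'] .
qed

lemma not_auto:
  assumes ps: "prim_subst \<sigma> S h lam m" and fp: "is_fixed_point \<sigma> w" and inS: "\<forall>i. w i \<in> S"
    and aS: "\<alpha> \<in> S"
    and mu: "\<forall>f. (\<Sum>t\<in>S. \<mu> t * sum_list (map f (\<sigma> t))) = lam * (\<Sum>t\<in>S. \<mu> t * f t)"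
    and q2: "q \<ge> 2"
    and irr: "\<forall>th. th * (\<Sum>t\<in>S. \<mu> t) = \<mu> \<alpha> \<longrightarrow> th \<notin> \<rat>"
  shows "\<not> q_automatic q w"
proof
  assume qa: "q_automatic q w"
  interpret prim_subst \<sigma> S h lam m by (rule ps)
  obtain th where conv: "\<forall>t\<in>S. (\<lambda>k. R \<alpha> k t) \<longlonglongrightarrow> th" using R_conv by blast
  have pf: "(\<lambda>N. real (cnt \<alpha> (pref w N)) / real N) \<longlonglongrightarrow> th" by (rule pref_freq[OF fp inS conv])
  have sm: "strict_mono (\<lambda>k. q ^ k)" using q2 by (intro strict_monoI power_strict_increasing) auto
  have "((\<lambda>N. real (cnt \<alpha> (pref w N)) / real N) \<circ> (\<lambda>k. q ^ k)) \<longlonglongrightarrow> th"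
    by (rule LIMSEQ_subseq_LIMSEQ[OF pf sm])
  then have "(\<lambda>k. real (cnt \<alpha> (pref w (q ^ k))) / real (q ^ k)) \<longlonglongrightarrow> th" by (simp add: comp_def)
  then have "th \<in> \<rat>" using auto_lim_rat[OF qa q2] by blast
  moreover have "th * (\<Sum>t\<in>S. \<mu> t) = \<mu> \<alpha>" by (rule ident[OF mu aS conv])
  ultimately show False using irr by blast
qed


lemma rat_root_nat:
  fixes xx :: real
  assumes "xx \<in> \<rat>" "xx > 0"
    and dv: "\<And>m n. n > 0 \<Longrightarrow> xx = real m / real n \<Longrightarrow> int n dvd (int m) ^ k"
  shows "\<exists>m::nat. xx = real m"
proof -
  obtain m n :: nat where n: "n \<noteq> 0" and x: "\<bar>xx\<bar> = real m / real n" and cop: "coprime m n"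
    using Rats_abs_nat_div_natE[OF assms(1)] by blast
  have x': "xx = real m / real n" using x assms(2) by simp
  have "int n dvd (int m) ^ k" using dv n x' by simp
  moreover have "coprime (int n) ((int m) ^ k)" using cop by (simp add: coprime_commute)
  ultimately have "is_unit (int n)" by (meson coprime_common_divisor dvd_refl)
  then have "n = 1" by simp
  then show ?thesis using x' by auto
qed

lemma no_nat_between:
  assumes "real (m::nat) > real k" "real m < real k + 1"
  shows False
proof -
  have "k < m" using assms(1) by simp
  then have "real k + 1 \<le> real m" by linarith
  then show False using assms(2) by linarith
qed

lemma lin_rat:
  fixes lam c1 c0 :: real
  assumes "c1 * lam + c0 = 0" "c1 \<in> \<rat>" "c0 \<in> \<rat>" "c1 \<noteq> 0"
  shows "lam \<in> \<rat>"
proof -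
  have "lam = - c0 / c1" using assms by (simp add: field_simps) 
  then show ?thesis using assms by (simp add: Rats_divide Rats_minus_iff)
qed

lemma length_concat_ge:
  assumes "\<forall>g\<in>set L. length (f g) \<ge> M"
  shows "length (concat (map f L)) \<ge> length L * M"
  using assms by (induction L) auto

lemma inS_gen:
  assumes fp: "is_fixed_point \<sigma> w" and w0: "w 0 \<in> S"
    and cl: "\<forall>t\<in>S. set (\<sigma> t) \<subseteq> S \<and> length (\<sigma> t) \<ge> 2"
  shows "\<forall>n. w n \<in> S"
proof
  fix n
  have cl': "\<forall>t\<in>S. \<sigma> t \<noteq> [] \<and> set (\<sigma> t) \<subseteq> S" using cl by fastforce
  have lenk: "t \<in> S \<Longrightarrow> length (morph_pow \<sigma> k t) \<ge> 2 ^ k" for k t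
  proof (induction k arbitrary: t)
    case (Suc k)
    have "length (morph_pow \<sigma> (Suc k) t) \<ge> length (\<sigma> t) * 2 ^ k"
      unfolding mp_Suc' using Suc cl by (intro length_concat_ge) auto
    moreover have "length (\<sigma> t) * 2 ^ k \<ge> 2 * 2 ^ k" using cl Suc.prems by (intro mult_le_mono1) auto
    ultimately show ?case by (metis power_Suc le_trans)
  qed simp
  define L where "L = length (morph_pow \<sigma> n (w 0))"
  have "Mk \<sigma> n (pref w 1) = morph_pow \<sigma> n (w 0)" by (simp add: Mk_def pref_def)
  then have pe: "pref w L = morph_pow \<sigma> n (w 0)" using fp_iter[OF fp, of n 1] by (simp add: L_def)
  have "n < 2 ^ n" by (rule less_exp)
  also have "\<dots> \<le> L" unfolding L_def by (rule lenk[OF w0])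
  finally have nL: "n < L" .
  have "w n = pref w L ! n" using nL by (simp add: nth_pref)
  also have "\<dots> \<in> set (morph_pow \<sigma> n (w 0))" using pe nL by (metis length_pref nth_mem)
  finally show "w n \<in> S" using mp_nonempty[OF cl' w0] by blast
qed


fun h2 :: "real \<Rightarrow> L3 \<Rightarrow> real" where
  "h2 l x = l^2" | "h2 l y = 2 * l" | "h2 l z = 4"
fun mu2 :: "real \<Rightarrow> L3 \<Rightarrow> real" where
  "mu2 l x = 2 * l" | "mu2 l y = l^2 - l" | "mu2 l z = 2"

lemma lam2_ex: "\<exists>l::real. l^3 - l^2 - 2*l - 4 = 0 \<and> 2 < l \<and> l < 3"
proof -
  have "\<exists>l. 2 \<le> l \<and> l \<le> 3 \<and> (\<lambda>l::real. l^3 - l^2 - 2*l - 4) l = 0"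
    by (rule IVT') (auto intro!: continuous_intros simp: power3_eq_cube power2_eq_square)
  then obtain l :: real where l: "2 \<le> l" "l \<le> 3" "l^3 - l^2 - 2*l - 4 = 0" by auto
  have "l \<noteq> 2" using l(3) by auto
  moreover have "l \<noteq> 3" using l(3) by auto
  ultimately show ?thesis using l by force
qed

lemma lam2_irr:
  fixes l :: real
  assumes eq: "l^3 - l^2 - 2*l - 4 = 0" and b: "2 < l" "l < 3"
  shows "l \<notin> \<rat>"
proof
  assume r: "l \<in> \<rat>"
  have "\<exists>m::nat. l = real m"
  proof (rule rat_root_nat[OF r, of 3])
    show "l > 0" using b by simp
    fix m n :: nat assume n: "n > 0" and lm: "l = real m / real n"
    have "real n ^ 3 * (l^3 - l^2 - 2*l - 4) = real m ^ 3 - real m ^ 2 * real n - 2 * real m * real n ^ 2 - 4 * real n ^ 3"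
      unfolding lm using n by (simp add: field_simps power3_eq_cube power2_eq_square)
    moreover have "real n ^ 3 * (l^3 - l^2 - 2*l - 4) = 0" using eq by simp
    ultimately have "real m ^ 3 - real m ^ 2 * real n - 2 * real m * real n ^ 2 - 4 * real n ^ 3 = 0" by simp
    then have "real m ^ 3 = real n * (real m ^ 2 + 2 * real m * real n + 4 * real n ^ 2)"
      by algebra
    then have "m ^ 3 = n * (m ^ 2 + 2 * m * n + 4 * n ^ 2)"
      by (metis (mono_tags, lifting) of_nat_add of_nat_eq_iff of_nat_mult of_nat_numeral of_nat_power)
    then have "n dvd m ^ 3" by simp
    then show "int n dvd (int m) ^ 3" by (metis int_dvd_int_iff of_nat_power)
  qed
  then obtain m :: nat where "l = real m" by blast
  then show False using b no_nat_between[of m 2] by simp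
qed

lemma irr2:
  fixes l :: real
  assumes eq: "l^3 - l^2 - 2*l - 4 = 0" and b: "2 < l" "l < 3"
  shows "\<forall>th. th * (\<Sum>t\<in>{x, y, z}. mu2 l t) = mu2 l z \<longrightarrow> th \<notin> \<rat>"
proof (intro allI impI notI)
  fix th assume h: "th * (\<Sum>t\<in>{x, y, z}. mu2 l t) = mu2 l z" and r: "th \<in> \<rat>"
  have h': "th * (l^2 + l + 2) = 2" using h by (simp add: algebra_simps)
  have th0: "th \<noteq> 0" using h' by auto
  define cc where "cc = 2 - 2 / th"
  have ccr: "cc \<in> \<rat>" using r by (simp add: cc_def)
  have q: "l^2 + l + cc = 0" using h' th0 by (simp add: cc_def field_simps)
  have "l^3 - l^2 - 2*l - 4 = (l^2 + l + cc) * (l - 2) + ((- cc) * l + (2 * cc - 4))"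
    by (simp add: algebra_simps power3_eq_cube power2_eq_square)
  then have lin: "(- cc) * l + (2 * cc - 4) = 0" using eq q by simp
  show False
  proof (cases "cc = 0")
    case True then show False using lin by simp
  next
    case False
    have "l \<in> \<rat>" by (rule lin_rat[OF lin]) (use ccr False in auto)
    then show False using lam2_irr[OF eq b] by blast
  qed
qed

lemma inst2:
  assumes fp: "is_fixed_point \<sigma>2 w" and q2: "q \<ge> 2"
  shows "\<not> q_automatic q w"
proof -
  obtain l :: real where eq: "l^3 - l^2 - 2*l - 4 = 0" and b: "2 < l" "l < 3" using lam2_ex by blast
  have l3: "l^3 = l^2 + 2*l + 4" using eq by simp
  have ps: "prim_subst \<sigma>2 {x, y, z} (h2 l) l 3"
  proof
    show "finite {x, y, z}" by simp
    show "{x, y, z} \<noteq> {}" by simp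
    show "\<forall>t\<in>{x, y, z}. \<sigma>2 t \<noteq> [] \<and> set (\<sigma>2 t) \<subseteq> {x, y, z}" by simp
    show "\<forall>t\<in>{x, y, z}. h2 l t > 0" using b by simp
    show "\<forall>t\<in>{x, y, z}. sum_list (map (h2 l) (\<sigma>2 t)) = l * h2 l t"
      using l3 by (simp add: algebra_simps power3_eq_cube power2_eq_square)
    show "\<forall>t\<in>{x, y, z}. \<forall>g\<in>{x, y, z}. g \<in> set (morph_pow \<sigma>2 3 t)"
      by (simp add: morph_word_def numeral_3_eq_3)
    show "(3::nat) > 0" by simp
  qed
  have inS: "\<forall>i. w i \<in> {x, y, z}"
  proof
    fix i show "w i \<in> {x, y, z}" by (cases "w i") auto
  qed
  have mu: "\<forall>f. (\<Sum>t\<in>{x, y, z}. mu2 l t * sum_list (map f (\<sigma>2 t))) = l * (\<Sum>t\<in>{x, y, z}. mu2 l t * f t)"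
  proof
    fix f :: "L3 \<Rightarrow> real"
    show "(\<Sum>t\<in>{x, y, z}. mu2 l t * sum_list (map f (\<sigma>2 t))) = l * (\<Sum>t\<in>{x, y, z}. mu2 l t * f t)"
      using l3 by simp algebra
  qed
  show ?thesis by (rule not_auto[OF ps fp inS _ mu q2 irr2[OF eq b]]) simp
qed


fun \<tau>3 :: "L4 \<Rightarrow> L4 list" where
  "\<tau>3 a = [a, b, a]" | "\<tau>3 b = [b, c, b]" | "\<tau>3 c = [c, a, b, a, c]" | "\<tau>3 d = [d]"

lemma tau3_eq: "morph_pow \<sigma>3 3 = \<tau>3"
proof
  fix t show "morph_pow \<sigma>3 3 t = \<tau>3 t" by (cases t) (simp_all add: morph_word_def numeral_3_eq_3)
qed

fun h3 :: "real \<Rightarrow> L4 \<Rightarrow> real" where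
  "h3 l a = 1" | "h3 l b = l" | "h3 l c = l^2" | "h3 l d = 1"
fun mu3 :: "real \<Rightarrow> L4 \<Rightarrow> real" where
  "mu3 l a = 2" | "mu3 l b = l^2" | "mu3 l c = l" | "mu3 l d = 0"

lemma lam3_ex: "\<exists>l::real. l^3 - l - 2 = 0 \<and> 1 < l \<and> l < 2"
proof -
  have "\<exists>l. 1 \<le> l \<and> l \<le> 2 \<and> (\<lambda>l::real. l^3 - l - 2) l = 0"
    by (rule IVT') (auto intro!: continuous_intros simp: power3_eq_cube)
  then obtain l :: real where l: "1 \<le> l" "l \<le> 2" "l^3 - l - 2 = 0" by auto
  have "l \<noteq> 1" using l(3) by auto
  moreover have "l \<noteq> 2" using l(3) by auto
  ultimately show ?thesis using l by force
qed

lemma lam3_irr: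
  fixes l :: real
  assumes eq: "l^3 - l - 2 = 0" and bd: "1 < l" "l < 2"
  shows "l \<notin> \<rat>"
proof
  assume r: "l \<in> \<rat>"
  have "\<exists>m::nat. l = real m"
  proof (rule rat_root_nat[OF r, of 3])
    show "l > 0" using bd by simp
    fix m n :: nat assume n: "n > 0" and lm: "l = real m / real n"
    have "real n ^ 3 * (l^3 - l - 2) = real m ^ 3 - real m * real n ^ 2 - 2 * real n ^ 3"
      unfolding lm using n by (simp add: field_simps power3_eq_cube power2_eq_square)
    moreover have "real n ^ 3 * (l^3 - l - 2) = 0" using eq by simp
    ultimately have "real m ^ 3 - real m * real n ^ 2 - 2 * real n ^ 3 = 0" by simp
    then have "real m ^ 3 = real n * (real m * real n + 2 * real n ^ 2)" by algebra
    then have "m ^ 3 = n * (m * n + 2 * n ^ 2)"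
      by (metis (mono_tags, lifting) of_nat_add of_nat_eq_iff of_nat_mult of_nat_numeral of_nat_power)
    then have "n dvd m ^ 3" by simp
    then show "int n dvd (int m) ^ 3" by (metis int_dvd_int_iff of_nat_power)
  qed
  then obtain m :: nat where "l = real m" by blast
  then show False using bd no_nat_between[of m 1] by simp
qed

lemma irr3:
  fixes l :: real
  assumes eq: "l^3 - l - 2 = 0" and bd: "1 < l" "l < 2"
  shows "\<forall>th. th * (\<Sum>t\<in>{a, b, c}. mu3 l t) = mu3 l c \<longrightarrow> th \<notin> \<rat>"
proof (intro allI impI notI)
  fix th assume hh: "th * (\<Sum>t\<in>{a, b, c}. mu3 l t) = mu3 l c" and r: "th \<in> \<rat>"
  have h': "th * (l^2 + l + 2) = l" using hh by (simp add: algebra_simps)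
  have th0: "th \<noteq> 0" using h' bd by auto
  define bb where "bb = 1 - 1 / th"
  have bbr: "bb \<in> \<rat>" using r by (simp add: bb_def)
  have qq: "l^2 + bb * l + 2 = 0" using h' th0 by (simp add: bb_def field_simps)
  have "l^3 - l - 2 = (l^2 + bb * l + 2) * (l - bb) + ((bb^2 - 3) * l + (2 * bb - 2))"
    by (simp add: algebra_simps power3_eq_cube power2_eq_square)
  then have lin: "(bb^2 - 3) * l + (2 * bb - 2) = 0" using eq qq by simp
  show False
  proof (cases "bb^2 - 3 = 0")
    case True
    then have "bb = 1" using lin by simp
    then show False using True by simp
  next
    case False
    have "l \<in> \<rat>" by (rule lin_rat[OF lin]) (use bbr False in auto)
    then show False using lam3_irr[OF eq bd] by blast
  qed
qed

lemma inst3: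
  assumes fp0: "is_fixed_point (morph_pow \<sigma>3 3) w" and w0: "w 0 \<in> {a, b}" and q2: "q \<ge> 2"
  shows "\<not> q_automatic q w"
proof -
  have fp: "is_fixed_point \<tau>3 w" using fp0 by (simp add: tau3_eq)
  obtain l :: real where eq: "l^3 - l - 2 = 0" and bd: "1 < l" "l < 2" using lam3_ex by blast
  have l3: "l^3 = l + 2" using eq by simp
  have ps: "prim_subst \<tau>3 {a, b, c} (h3 l) (l + 2) 2"
  proof
    show "finite {a, b, c}" by simp
    show "{a, b, c} \<noteq> {}" by simp
    show "\<forall>t\<in>{a, b, c}. \<tau>3 t \<noteq> [] \<and> set (\<tau>3 t) \<subseteq> {a, b, c}" by simp
    show "\<forall>t\<in>{a, b, c}. h3 l t > 0" using bd by simp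
    show "\<forall>t\<in>{a, b, c}. sum_list (map (h3 l) (\<tau>3 t)) = (l + 2) * h3 l t"
      using l3 by simp algebra
    show "\<forall>t\<in>{a, b, c}. \<forall>g\<in>{a, b, c}. g \<in> set (morph_pow \<tau>3 2 t)"
      by (simp add: morph_word_def numeral_2_eq_2)
    show "(2::nat) > 0" by simp
  qed
  have inS: "\<forall>i. w i \<in> {a, b, c}"
    by (rule inS_gen[OF fp]) (use w0 in auto)
  have mu: "\<forall>f. (\<Sum>t\<in>{a, b, c}. mu3 l t * sum_list (map f (\<tau>3 t))) = (l + 2) * (\<Sum>t\<in>{a, b, c}. mu3 l t * f t)"
  proof
    fix f :: "L4 \<Rightarrow> real"
    show "(\<Sum>t\<in>{a, b, c}. mu3 l t * sum_list (map f (\<tau>3 t))) = (l + 2) * (\<Sum>t\<in>{a, b, c}. mu3 l t * f t)"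
      using l3 by simp algebra
  qed
  show ?thesis by (rule not_auto[OF ps fp inS _ mu q2 irr3[OF eq bd]]) simp
qed


fun \<pi>4 :: "L4 \<Rightarrow> L4 list" where
  "\<pi>4 a = [a, b, a]" | "\<pi>4 b = [b, c, a, b, a, c, b]" | "\<pi>4 c = [c, a, b, a, c]" | "\<pi>4 d = [d]"

lemma pi4_eq: "morph_pow \<rho> 3 = \<pi>4"
proof
  fix t show "morph_pow \<rho> 3 t = \<pi>4 t" by (cases t) (simp_all add: morph_word_def numeral_3_eq_3)
qed

fun h4 :: "real \<Rightarrow> L4 \<Rightarrow> real" where
  "h4 l a = 1" | "h4 l b = l^2" | "h4 l c = l" | "h4 l d = 1"
fun mu4 :: "real \<Rightarrow> L4 \<Rightarrow> real" where
  "mu4 l a = 2 * l" | "mu4 l b = l^2" | "mu4 l c = 2" | "mu4 l d = 0"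

lemma lam4_ex: "\<exists>l::real. l^3 - l^2 - 2 = 0 \<and> 1 < l \<and> l < 2"
proof -
  have "\<exists>l. 1 \<le> l \<and> l \<le> 2 \<and> (\<lambda>l::real. l^3 - l^2 - 2) l = 0"
    by (rule IVT') (auto intro!: continuous_intros simp: power3_eq_cube power2_eq_square)
  then obtain l :: real where l: "1 \<le> l" "l \<le> 2" "l^3 - l^2 - 2 = 0" by auto
  have "l \<noteq> 1" using l(3) by auto
  moreover have "l \<noteq> 2" using l(3) by auto
  ultimately show ?thesis using l by force
qed

lemma lam4_irr:
  fixes l :: real
  assumes eq: "l^3 - l^2 - 2 = 0" and bd: "1 < l" "l < 2"
  shows "l \<notin> \<rat>"
proof
  assume r: "l \<in> \<rat>"
  have "\<exists>m::nat. l = real m"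
  proof (rule rat_root_nat[OF r, of 3])
    show "l > 0" using bd by simp
    fix m n :: nat assume n: "n > 0" and lm: "l = real m / real n"
    have "real n ^ 3 * (l^3 - l^2 - 2) = real m ^ 3 - real m ^ 2 * real n - 2 * real n ^ 3"
      unfolding lm using n by (simp add: field_simps power3_eq_cube power2_eq_square)
    moreover have "real n ^ 3 * (l^3 - l^2 - 2) = 0" using eq by simp
    ultimately have "real m ^ 3 - real m ^ 2 * real n - 2 * real n ^ 3 = 0" by simp
    then have "real m ^ 3 = real n * (real m ^ 2 + 2 * real n ^ 2)" by algebra
    then have "m ^ 3 = n * (m ^ 2 + 2 * n ^ 2)"
      by (metis (mono_tags, lifting) of_nat_add of_nat_eq_iff of_nat_mult of_nat_numeral of_nat_power)
    then have "n dvd m ^ 3" by simp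
    then show "int n dvd (int m) ^ 3" by (metis int_dvd_int_iff of_nat_power)
  qed
  then obtain m :: nat where "l = real m" by blast
  then show False using bd no_nat_between[of m 1] by simp
qed

lemma irr4:
  fixes l :: real
  assumes eq: "l^3 - l^2 - 2 = 0" and bd: "1 < l" "l < 2"
  shows "\<forall>th. th * (\<Sum>t\<in>{a, b, c}. mu4 l t) = mu4 l c \<longrightarrow> th \<notin> \<rat>"
proof (intro allI impI notI)
  fix th assume hh: "th * (\<Sum>t\<in>{a, b, c}. mu4 l t) = mu4 l c" and r: "th \<in> \<rat>"
  have h': "th * (l^2 + 2 * l + 2) = 2" using hh by (simp add: algebra_simps)
  have th0: "th \<noteq> 0" using h' by auto
  define cc where "cc = 2 - 2 / th"
  have ccr: "cc \<in> \<rat>" using r by (simp add: cc_def)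
  have qq: "l^2 + 2 * l + cc = 0" using h' th0 by (simp add: cc_def field_simps)
  have "l^3 - l^2 - 2 = (l^2 + 2 * l + cc) * (l - 3) + ((6 - cc) * l + (3 * cc - 2))"
    by (simp add: algebra_simps power3_eq_cube power2_eq_square)
  then have lin: "(6 - cc) * l + (3 * cc - 2) = 0" using eq qq by simp
  show False
  proof (cases "6 - cc = 0")
    case True
    then show False using lin by simp
  next
    case False
    have "l \<in> \<rat>" by (rule lin_rat[OF lin]) (use ccr False in auto)
    then show False using lam4_irr[OF eq bd] by blast
  qed
qed

lemma inst4:
  assumes fp0: "is_fixed_point (morph_pow \<rho> 3) w" and w0: "w 0 \<in> {a, b, c}" and q2: "q \<ge> 2"
  shows "\<not> q_automatic q w"
proof -
  have fp: "is_fixed_point \<pi>4 w" using fp0 by (simp add: pi4_eq)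
  obtain l :: real where eq: "l^3 - l^2 - 2 = 0" and bd: "1 < l" "l < 2" using lam4_ex by blast
  have l3: "l^3 = l^2 + 2" using eq by simp
  have ps: "prim_subst \<pi>4 {a, b, c} (h4 l) (l^2 + 2) 2"
  proof
    show "finite {a, b, c}" by simp
    show "{a, b, c} \<noteq> {}" by simp
    show "\<forall>t\<in>{a, b, c}. \<pi>4 t \<noteq> [] \<and> set (\<pi>4 t) \<subseteq> {a, b, c}" by simp
    show "\<forall>t\<in>{a, b, c}. h4 l t > 0" using bd by simp
    show "\<forall>t\<in>{a, b, c}. sum_list (map (h4 l) (\<pi>4 t)) = (l^2 + 2) * h4 l t"
      using l3 by simp algebra
    show "\<forall>t\<in>{a, b, c}. \<forall>g\<in>{a, b, c}. g \<in> set (morph_pow \<pi>4 2 t)"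
      by (simp add: morph_word_def numeral_2_eq_2)
    show "(2::nat) > 0" by simp
  qed
  have inS: "\<forall>i. w i \<in> {a, b, c}"
    by (rule inS_gen[OF fp]) (use w0 in auto)
  have mu: "\<forall>f. (\<Sum>t\<in>{a, b, c}. mu4 l t * sum_list (map f (\<pi>4 t))) = (l^2 + 2) * (\<Sum>t\<in>{a, b, c}. mu4 l t * f t)"
  proof
    fix f :: "L4 \<Rightarrow> real"
    show "(\<Sum>t\<in>{a, b, c}. mu4 l t * sum_list (map f (\<pi>4 t))) = (l^2 + 2) * (\<Sum>t\<in>{a, b, c}. mu4 l t * f t)"
      using l3 by simp algebra
  qed
  show ?thesis by (rule not_auto[OF ps fp inS _ mu q2 irr4[OF eq bd]]) simp
qed

fun h1 :: "real \<Rightarrow> L4 \<Rightarrow> real" where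
  "h1 l a = l^3 - 1" | "h1 l b = 2" | "h1 l c = 2 * l^2" | "h1 l d = 2 * l"
fun mu1 :: "real \<Rightarrow> L4 \<Rightarrow> real" where
  "mu1 l a = l^3 - 1" | "mu1 l b = l" | "mu1 l c = l^2" | "mu1 l d = 1"

lemma lam1_ex: "\<exists>l::real. l^4 - 2*l^3 - 2*l^2 - l + 2 = 0 \<and> 2 < l \<and> l < 3"
proof -
  have "\<exists>l. 2 \<le> l \<and> l \<le> 3 \<and> (\<lambda>l::real. l^4 - 2*l^3 - 2*l^2 - l + 2) l = 0"
    by (rule IVT') (auto intro!: continuous_intros simp: power3_eq_cube power2_eq_square power4_eq_xxxx)
  then obtain l :: real where l: "2 \<le> l" "l \<le> 3" "l^4 - 2*l^3 - 2*l^2 - l + 2 = 0" by auto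
  have "l \<noteq> 2" using l(3) by auto
  moreover have "l \<noteq> 3" using l(3) by auto
  ultimately show ?thesis using l by force
qed

lemma lam1_irr:
  fixes l :: real
  assumes eq: "l^4 - 2*l^3 - 2*l^2 - l + 2 = 0" and bd: "2 < l" "l < 3"
  shows "l \<notin> \<rat>"
proof
  assume r: "l \<in> \<rat>"
  have "\<exists>m::nat. l = real m"
  proof (rule rat_root_nat[OF r, of 4])
    show "l > 0" using bd by simp
    fix m n :: nat assume n: "n > 0" and lm: "l = real m / real n"
    have "real n ^ 4 * (l^4 - 2*l^3 - 2*l^2 - l + 2) =
          real m ^ 4 - 2 * real m ^ 3 * real n - 2 * real m ^ 2 * real n ^ 2 - real m * real n ^ 3 + 2 * real n ^ 4"
      unfolding lm using n by (simp add: field_simps power3_eq_cube power2_eq_square power4_eq_xxxx)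
    moreover have "real n ^ 4 * (l^4 - 2*l^3 - 2*l^2 - l + 2) = 0" using eq by simp
    ultimately have "real m ^ 4 - 2 * real m ^ 3 * real n - 2 * real m ^ 2 * real n ^ 2 - real m * real n ^ 3 + 2 * real n ^ 4 = 0"
      by simp
    then have "real_of_int (int m ^ 4) = real_of_int (int n * (2 * int m ^ 3 + 2 * int m ^ 2 * int n + int m * int n ^ 2 - 2 * int n ^ 3))"
      by simp algebra
    then have "int m ^ 4 = int n * (2 * int m ^ 3 + 2 * int m ^ 2 * int n + int m * int n ^ 2 - 2 * int n ^ 3)"
      using of_int_eq_iff by blast
    then show "int n dvd (int m) ^ 4" by simp
  qed
  then obtain m :: nat where "l = real m" by blast
  then show False using bd no_nat_between[of m 2] by simp
qed

lemma irr1: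
  fixes l :: real
  assumes eq: "l^4 - 2*l^3 - 2*l^2 - l + 2 = 0" and bd: "2 < l" "l < 3"
  shows "\<forall>th. th * (\<Sum>t\<in>{a, b, c, d}. mu1 l t) = mu1 l c \<longrightarrow> th \<notin> \<rat>"
proof (intro allI impI notI)
  fix th assume hh: "th * (\<Sum>t\<in>{a, b, c, d}. mu1 l t) = mu1 l c" and r: "th \<in> \<rat>"
  have "th * (l^3 + l^2 + l) = l^2" using hh by (simp add: algebra_simps)
  then have "l * (th * (l^2 + l + 1)) = l * l" by (simp add: algebra_simps power3_eq_cube power2_eq_square)
  then have h': "th * (l^2 + l + 1) = l" using bd by simp
  have th0: "th \<noteq> 0" using h' bd by auto
  define ss where "ss = 1 / th - 1"
  have ssr: "ss \<in> \<rat>" using r by (simp add: ss_def)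
  have qq: "l^2 - ss * l + 1 = 0" using h' th0 by (simp add: ss_def field_simps)
  define c1 where "c1 = ss^3 - 2 * ss^2 - 4 * ss + 1"
  define c0 where "c0 = 2 * ss + 5 - ss^2"
  have "l^4 - 2*l^3 - 2*l^2 - l + 2 = (l^2 - ss * l + 1) * (l^2 + (ss - 2) * l + (ss^2 - 2 * ss - 3)) + (c1 * l + c0)"
    unfolding c1_def c0_def by (simp add: algebra_simps power3_eq_cube power2_eq_square power4_eq_xxxx)
  then have lin: "c1 * l + c0 = 0" using eq qq by simp
  show False
  proof (cases "c1 = 0")
    case True
    then have c00: "c0 = 0" using lin by simp
    have "c1 = - ss * c0 + ss + 1" unfolding c1_def c0_def by (simp add: algebra_simps power3_eq_cube power2_eq_square)
    then have "ss = -1" using True c00 by simp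
    then show False using c00 by (simp add: c0_def)
  next
    case False
    have "c1 \<in> \<rat>" "c0 \<in> \<rat>" using ssr by (simp_all add: c1_def c0_def)
    then have "l \<in> \<rat>" using lin_rat[OF lin] False by blast
    then show False using lam1_irr[OF eq bd] by blast
  qed
qed

lemma inst1:
  assumes fp: "is_fixed_point \<sigma>1 w" and q2: "q \<ge> 2"
  shows "\<not> q_automatic q w"
proof -
  obtain l :: real where eq: "l^4 - 2*l^3 - 2*l^2 - l + 2 = 0" and bd: "2 < l" "l < 3" using lam1_ex by blast
  have l4: "l^4 = 2*l^3 + 2*l^2 + l - 2" using eq by simp
  have l31: "l^3 > 1" using bd by (simp add: one_less_power)
  have ps: "prim_subst \<sigma>1 {a, b, c, d} (h1 l) l 6"
  proof
    show "finite {a, b, c, d}" by simp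
    show "{a, b, c, d} \<noteq> {}" by simp
    show "\<forall>t\<in>{a, b, c, d}. \<sigma>1 t \<noteq> [] \<and> set (\<sigma>1 t) \<subseteq> {a, b, c, d}" by simp
    show "\<forall>t\<in>{a, b, c, d}. h1 l t > 0" using bd l31 by simp
    show "\<forall>t\<in>{a, b, c, d}. sum_list (map (h1 l) (\<sigma>1 t)) = l * h1 l t"
      using l4 by simp algebra
    show "\<forall>t\<in>{a, b, c, d}. \<forall>g\<in>{a, b, c, d}. g \<in> set (morph_pow \<sigma>1 6 t)"
      by (simp add: morph_word_def numeral_eq_Suc)
    show "(6::nat) > 0" by simp
  qed
  have inS: "\<forall>i. w i \<in> {a, b, c, d}"
  proof
    fix i show "w i \<in> {a, b, c, d}" by (cases "w i") auto
  qed
  have mu: "\<forall>f. (\<Sum>t\<in>{a, b, c, d}. mu1 l t * sum_list (map f (\<sigma>1 t))) = l * (\<Sum>t\<in>{a, b, c, d}. mu1 l t * f t)"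
  proof
    fix f :: "L4 \<Rightarrow> real"
    show "(\<Sum>t\<in>{a, b, c, d}. mu1 l t * sum_list (map f (\<sigma>1 t))) = l * (\<Sum>t\<in>{a, b, c, d}. mu1 l t * f t)"
      using l4 by simp algebra
  qed
  show ?thesis by (rule not_auto[OF ps fp inS _ mu q2 irr1[OF eq bd]]) simp
qed


theorem mainTheorem11:
  shows "(\<forall>w q. is_fixed_point \<sigma>1 w \<and> w 0 = a \<and> q \<ge> 2 \<longrightarrow> \<not> q_automatic q w)
       \<and> (\<forall>w q. is_fixed_point \<sigma>2 w \<and> w 0 = x \<and> q \<ge> 2 \<longrightarrow> \<not> q_automatic q w)
       \<and> (\<forall>w q. is_fixed_point (morph_pow \<sigma>3 3) w \<and> w 0 \<in> {a, b} \<and> q \<ge> 2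
              \<longrightarrow> \<not> q_automatic q w)
       \<and> (\<forall>w q. is_fixed_point (morph_pow \<rho> 3) w \<and> w 0 \<in> {a, b, c} \<and> q \<ge> 2
              \<longrightarrow> \<not> q_automatic q w)"
proof (intro conjI allI impI)
  fix w :: "nat \<Rightarrow> L4" and q :: nat
  assume "is_fixed_point \<sigma>1 w \<and> w 0 = a \<and> q \<ge> 2"
  then show "\<not> q_automatic q w" using inst1 by blast
next
  fix w :: "nat \<Rightarrow> L3" and q :: nat
  assume "is_fixed_point \<sigma>2 w \<and> w 0 = x \<and> q \<ge> 2"
  then show "\<not> q_automatic q w" using inst2 by blast
next
  fix w :: "nat \<Rightarrow> L4" and q :: nat
  assume "is_fixed_point (morph_pow \<sigma>3 3) w \<and> w 0 \<in> {a, b} \<and> q \<ge> 2"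
  then show "\<not> q_automatic q w" using inst3 by blast
next
  fix w :: "nat \<Rightarrow> L4" and q :: nat
  assume "is_fixed_point (morph_pow \<rho> 3) w \<and> w 0 \<in> {a, b, c} \<and> q \<ge> 2"
  then show "\<not> q_automatic q w" using inst4 by blast
qed

end
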